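(* Let $X$ be a real random variable with finite mean $\mu:=\mathbb{E}(X)$ such that $\mu$ is also a median of $X$, i.e. $\mathbb{P}(X\ge\mu)\ge\frac12$ and $\mathbb{P}(X\le\mu)\ge\frac12$. Then \[ \mathbb{E}(X\mid X\ge \mu) \le \mu + \sqrt{\text{Var}(X)}. \] *)

theory Defs
  imports "HOL-Probability.Probability"
begin

definition cond_exp_event :: "'a measure \<Rightarrow> ('a \<Rightarrow> real) \<Rightarrow> 'a set \<Rightarrow> real" where
  "cond_exp_event M X A = (LINT x:A|M. X x) / measure M A"

end

theory Submission
  imports Defs
begin

theorem lemma5:
  fixes M :: "'a measure" and X :: "'a \<Rightarrow> real" and \<mu> :: real
  assumes "prob_space M"
    and "X \<in> borel_measurable M"
    and "integrable M X"
    and "integrable M (\<lambda>x. (X x)\<^sup>2)"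
    and "\<mu> = prob_space.expectation M X"
    and "measure M {x \<in> space M. X x \<ge> \<mu>} \<ge> 1/2"
    and "measure M {x \<in> space M. X x \<le> \<mu>} \<ge> 1/2"
  shows "cond_exp_event M X {x \<in> space M. X x \<ge> \<mu>}
           \<le> \<mu> + sqrt (prob_space.variance M X)"
proof -
  interpret prob_space M by fact
  define A where "A = {x \<in> space M. X x \<ge> \<mu>}"
  define p where "p = measure M A"
  have Asets: "A \<in> sets M" unfolding A_def using assms(2) by measurable
  have p: "p \<ge> 1/2" using assms(6) unfolding p_def A_def by simp
  have iY: "integrable M (\<lambda>x. X x - \<mu>)" using assms(3) by simp
  have iaY: "integrable M (\<lambda>x. \<bar>X x - \<mu>\<bar>)" using iY by (rule integrable_abs)
  have iY2: "integrable M (\<lambda>x. (X x - \<mu>)\<^sup>2)"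
    using assms(3,4) by (simp add: power2_diff)
  have iaY2: "integrable M (\<lambda>x. \<bar>X x - \<mu>\<bar>\<^sup>2)" using iY2 by simp
  define m where "m = expectation (\<lambda>x. \<bar>X x - \<mu>\<bar>)"
  have m0: "m \<ge> 0" unfolding m_def by (rule integral_nonneg_AE) auto
  have var: "variance X = expectation (\<lambda>x. (X x - \<mu>)\<^sup>2)" using assms(5) by simp
  have "0 \<le> variance (\<lambda>x. \<bar>X x - \<mu>\<bar>)" by (rule variance_positive)
  also have "\<dots> = expectation (\<lambda>x. (X x - \<mu>)\<^sup>2) - m\<^sup>2"
    using variance_eq[OF iaY iaY2] unfolding m_def by simp
  finally have "m\<^sup>2 \<le> variance X" using var by simp
  hence msq: "m \<le> sqrt (variance X)" using m0 real_le_rsqrt by blast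
  have EY: "expectation (\<lambda>x. X x - \<mu>) = 0"
    using assms(3,5) prob_space by simp
  have pw: "indicator A x *\<^sub>R X x = (\<bar>X x - \<mu>\<bar> + (X x - \<mu>)) / 2 + \<mu> * indicator A x"
    if "x \<in> space M" for x
    using that by (auto simp: A_def indicator_def field_simps)
  have "(LINT x:A|M. X x) = expectation (\<lambda>x. (\<bar>X x - \<mu>\<bar> + (X x - \<mu>)) / 2 + \<mu> * indicator A x)"
    unfolding set_lebesgue_integral_def by (rule Bochner_Integration.integral_cong) (use pw in auto)
  also have "\<dots> = expectation (\<lambda>x. (\<bar>X x - \<mu>\<bar> + (X x - \<mu>)) / 2) + expectation (\<lambda>x. \<mu> * indicator A x)"
    by (rule Bochner_Integration.integral_add) (use iaY iY Asets in \<open>auto intro!: integrable_real_indicator simp: less_top[symmetric]\<close>)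
  also have "\<dots> = m / 2 + \<mu> * p"
    using iaY iY EY Asets unfolding m_def p_def by simp
  finally have I: "(LINT x:A|M. X x) = m / 2 + \<mu> * p" .
  have "cond_exp_event M X A = \<mu> + m / (2 * p)"
    unfolding cond_exp_event_def I p_def[symmetric] using p by (simp add: field_simps)
  also have "m / (2*p) \<le> m" using p m0 mult_left_mono[of 1 "2*p" m] by (simp add: divide_le_eq)
  hence "\<mu> + m / (2 * p) \<le> \<mu> + sqrt (variance X)" using msq by linarith
  finally show ?thesis unfolding A_def .
qed

end
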